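(* Let $G$ be the disjointness graph of a finite family of (possibly self-intersecting) $2$-way infinite polygonal $3$-chains in the plane. Then $\chi(G)\le \omega(G)^3+\omega(G)$.
   Context: A $2$-way infinite polygonal $3$-chain is a continuous curve in the plane consisting of a closed half-line, a straight-line segment, and a closed half-line, where the segment shares one endpoint with each half-line. The disjointness graph of a family of subsets of the plane has the members as vertices, two adjacent if and only if they are disjoint. $\chi(G)$ and $\omega(G)$ denote the chromatic number and clique number of $G$. *)

theory Defs
  imports "HOL-Analysis.Analysis"
begin

definition half_line :: "real^2 \<Rightarrow> real^2 \<Rightarrow> (real^2) set" where
  "half_line p d = {p + t *\<^sub>R d | t. t \<ge> 0}"

definition two_way_3chain :: "(real^2) set \<Rightarrow> bool" where
  "two_way_3chain C \<longleftrightarrow> (\<exists>a b u v. a \<noteq> b \<and> u \<noteq> 0 \<and> v \<noteq> 0 \<and>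
      C = half_line a u \<union> closed_segment a b \<union> half_line b v)"

definition chromatic_number :: "'a set \<Rightarrow> ('a \<Rightarrow> 'a \<Rightarrow> bool) \<Rightarrow> nat" where
  "chromatic_number V E = (LEAST k. \<exists>c :: 'a \<Rightarrow> nat.
      (\<forall>x\<in>V. c x < k) \<and> (\<forall>x\<in>V. \<forall>y\<in>V. x \<noteq> y \<and> E x y \<longrightarrow> c x \<noteq> c y))"

definition clique_number :: "'a set \<Rightarrow> ('a \<Rightarrow> 'a \<Rightarrow> bool) \<Rightarrow> nat" where
  "clique_number V E = Max {card K | K. K \<subseteq> V \<and> (\<forall>x\<in>K. \<forall>y\<in>K. x \<noteq> y \<longrightarrow> E x y)}"

definition disjointness_adj :: "'b set \<Rightarrow> 'b set \<Rightarrow> bool" where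
  "disjointness_adj A B \<longleftrightarrow> A \<inter> B = {}"

end

theory Submission
  imports Defs
begin

lemma clique_card_le:
  assumes "finite V" "K \<subseteq> V" "\<forall>x\<in>K. \<forall>y\<in>K. x \<noteq> y \<longrightarrow> E x y"
  shows "card K \<le> clique_number V E"
proof -
  have "{card K | K. K \<subseteq> V \<and> (\<forall>x\<in>K. \<forall>y\<in>K. x \<noteq> y \<longrightarrow> E x y)} \<subseteq> card ` Pow V" by auto
  hence fin: "finite {card K | K. K \<subseteq> V \<and> (\<forall>x\<in>K. \<forall>y\<in>K. x \<noteq> y \<longrightarrow> E x y)}"
    using assms(1) finite_subset by blast
  show ?thesis unfolding clique_number_def
    by (rule Max_ge[OF fin]) (use assms in blast)
qed

lemma height_exists:
  assumes fin: "finite V" and W: "W \<subseteq> V"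
    and sym: "\<And>x y. E x y \<Longrightarrow> E y x"
    and irr: "\<And>x. x \<in> W \<Longrightarrow> \<not> P x x"
    and tr: "\<And>x y z. x \<in> W \<Longrightarrow> y \<in> W \<Longrightarrow> z \<in> W \<Longrightarrow> P x y \<Longrightarrow> P y z \<Longrightarrow> P x z"
    and adj: "\<And>x y. x \<in> W \<Longrightarrow> y \<in> W \<Longrightarrow> P x y \<Longrightarrow> E x y"
  shows "\<exists>h::'a \<Rightarrow> nat. (\<forall>x\<in>W. h x < clique_number V E) \<and>
            (\<forall>x\<in>W. \<forall>y\<in>W. P x y \<longrightarrow> h x < h y)"
proof -
  define Ch where "Ch x = {S. S \<subseteq> W \<and> x \<in> S \<and> (\<forall>a\<in>S. a = x \<or> P a x) \<and>
        (\<forall>a\<in>S. \<forall>b\<in>S. a \<noteq> b \<longrightarrow> P a b \<or> P b a)}" for x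
  define h where "h x = Max (card ` Ch x) - 1" for x
  have finW: "finite W" using fin W finite_subset by blast
  have finCh: "finite (card ` Ch x)" for x
  proof -
    have "Ch x \<subseteq> Pow W" unfolding Ch_def by auto
    thus ?thesis using finW by (meson finite_Pow_iff finite_imageI finite_subset)
  qed
  have single: "x \<in> W \<Longrightarrow> {x} \<in> Ch x" for x unfolding Ch_def by auto
  have cardle: "card S \<le> clique_number V E" if S: "S \<in> Ch x" for S x
  proof (rule clique_card_le[OF fin])
    have SW: "S \<subseteq> W" using S unfolding Ch_def by simp
    thus "S \<subseteq> V" using W by simp
    have cmp: "\<forall>a\<in>S. \<forall>b\<in>S. a \<noteq> b \<longrightarrow> P a b \<or> P b a" using S unfolding Ch_def by simp
    show "\<forall>a\<in>S. \<forall>b\<in>S. a \<noteq> b \<longrightarrow> E a b"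
    proof (intro ballI impI)
      fix a b assume ab: "a \<in> S" "b \<in> S" "a \<noteq> b"
      hence "P a b \<or> P b a" using cmp by blast
      thus "E a b" using adj[of a b] adj[of b a] sym[of b a] SW ab by blast
    qed
  qed
  have cardpos: "S \<in> Ch x \<Longrightarrow> 1 \<le> card S" for S x
    unfolding Ch_def using finW by (auto simp: Suc_le_eq card_gt_0_iff intro: finite_subset)
  have hlt: "x \<in> W \<Longrightarrow> h x < clique_number V E" for x
  proof -
    assume x: "x \<in> W"
    have ne: "card ` Ch x \<noteq> {}" using single[OF x] by auto
    obtain S where S: "S \<in> Ch x" "Max (card ` Ch x) = card S"
      using Max_in[OF finCh ne] by auto
    show ?thesis unfolding h_def using S cardle[OF S(1)] cardpos[OF S(1)] by linarith
  qed
  have hmono: "x \<in> W \<Longrightarrow> y \<in> W \<Longrightarrow> P x y \<Longrightarrow> h x < h y" for x y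
  proof -
    assume x: "x \<in> W" and y: "y \<in> W" and pxy: "P x y"
    have ne: "card ` Ch x \<noteq> {}" using single[OF x] by auto
    obtain S where S: "S \<in> Ch x" "Max (card ` Ch x) = card S"
      using Max_in[OF finCh ne] by auto
    have SW: "S \<subseteq> W" using S(1) unfolding Ch_def by auto
    have finS: "finite S" using SW finW finite_subset by blast
    have yS: "y \<notin> S"
    proof
      assume "y \<in> S"
      hence "y = x \<or> P y x" using S(1) unfolding Ch_def by auto
      thus False using irr[OF x] irr[OF y] pxy tr[OF x y x] by auto
    qed
    have below: "a \<in> S \<Longrightarrow> P a y" for a
    proof -
      assume a: "a \<in> S"
      hence "a = x \<or> P a x" using S(1) unfolding Ch_def by auto
      thus "P a y" using pxy tr[of a x y] SW a x y by auto
    qed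
    have "insert y S \<in> Ch y"
      using S(1) SW y below unfolding Ch_def by auto
    hence "card (insert y S) \<le> Max (card ` Ch y)"
      using Max_ge[OF finCh] by blast
    moreover have "card (insert y S) = card S + 1" using finS yS by simp
    moreover have "1 \<le> card S" using cardpos[OF S(1)] .
    ultimately show ?thesis unfolding h_def using S(2) by linarith
  qed
  show ?thesis using hlt hmono by blast
qed

lemma mixed_lt: "(a::nat) < n \<Longrightarrow> b < m \<Longrightarrow> a + n * b < n * m"
proof -
  assume "a < n" "b < m"
  hence "a + n * b < n + n * b" by simp
  also have "\<dots> = n * (b + 1)" by simp
  also have "\<dots> \<le> n * m" using \<open>b < m\<close> by (intro mult_le_mono2) simp
  finally show ?thesis .
qed

lemma mixed_inj:
  assumes "(a::nat) < n" "a' < n" "a + n * b = a' + n * b'"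
  shows "a = a' \<and> b = b'"
proof -
  have "(a + n * b) mod n = a" using assms(1) by simp
  moreover have "(a' + n * b') mod n = a'" using assms(2) by simp
  ultimately have "a = a'" using assms(3) by metis
  with assms(3) have "n * b = n * b'" by simp
  moreover have "n > 0" using assms(1) by simp
  ultimately show ?thesis using \<open>a = a'\<close> by simp
qed

lemma coloring_bound:
  assumes fin: "finite V"
    and sym: "\<And>x y. E x y \<Longrightarrow> E y x"
    and W1: "W1 \<subseteq> V"
    and P0: "\<And>x. x \<in> W1 \<Longrightarrow> \<not> P0 x x"
      "\<And>x y z. x \<in> W1 \<Longrightarrow> y \<in> W1 \<Longrightarrow> z \<in> W1 \<Longrightarrow> P0 x y \<Longrightarrow> P0 y z \<Longrightarrow> P0 x z"
      "\<And>x y. x \<in> W1 \<Longrightarrow> y \<in> W1 \<Longrightarrow> P0 x y \<Longrightarrow> E x y"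
    and cov0: "\<And>x y. x \<in> W1 \<Longrightarrow> y \<in> W1 \<Longrightarrow> x \<noteq> y \<Longrightarrow> E x y \<Longrightarrow> P0 x y \<or> P0 y x"
    and P1: "\<And>x. x \<in> V - W1 \<Longrightarrow> \<not> P1 x x"
      "\<And>x y z. x \<in> V - W1 \<Longrightarrow> y \<in> V - W1 \<Longrightarrow> z \<in> V - W1 \<Longrightarrow> P1 x y \<Longrightarrow> P1 y z \<Longrightarrow> P1 x z"
      "\<And>x y. x \<in> V - W1 \<Longrightarrow> y \<in> V - W1 \<Longrightarrow> P1 x y \<Longrightarrow> E x y"
    and P2: "\<And>x. x \<in> V - W1 \<Longrightarrow> \<not> P2 x x"
      "\<And>x y z. x \<in> V - W1 \<Longrightarrow> y \<in> V - W1 \<Longrightarrow> z \<in> V - W1 \<Longrightarrow> P2 x y \<Longrightarrow> P2 y z \<Longrightarrow> P2 x z"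
      "\<And>x y. x \<in> V - W1 \<Longrightarrow> y \<in> V - W1 \<Longrightarrow> P2 x y \<Longrightarrow> E x y"
    and P3: "\<And>x. x \<in> V - W1 \<Longrightarrow> \<not> P3 x x"
      "\<And>x y z. x \<in> V - W1 \<Longrightarrow> y \<in> V - W1 \<Longrightarrow> z \<in> V - W1 \<Longrightarrow> P3 x y \<Longrightarrow> P3 y z \<Longrightarrow> P3 x z"
      "\<And>x y. x \<in> V - W1 \<Longrightarrow> y \<in> V - W1 \<Longrightarrow> P3 x y \<Longrightarrow> E x y"
    and cov: "\<And>x y. x \<in> V - W1 \<Longrightarrow> y \<in> V - W1 \<Longrightarrow> x \<noteq> y \<Longrightarrow> E x y \<Longrightarrow>
        P1 x y \<or> P1 y x \<or> P2 x y \<or> P2 y x \<or> P3 x y \<or> P3 y x"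
  shows "\<exists>c::'a \<Rightarrow> nat. (\<forall>x\<in>V. c x < clique_number V E ^ 3 + clique_number V E) \<and>
      (\<forall>x\<in>V. \<forall>y\<in>V. x \<noteq> y \<and> E x y \<longrightarrow> c x \<noteq> c y)"
proof -
  let ?w = "clique_number V E"
  obtain h0 where h0: "\<forall>x\<in>W1. h0 x < ?w" "\<forall>x\<in>W1. \<forall>y\<in>W1. P0 x y \<longrightarrow> h0 x < h0 y"
    using height_exists[OF fin W1, of E P0] sym P0 by blast
  have W2: "V - W1 \<subseteq> V" by auto
  obtain h1 where h1: "\<forall>x\<in>V-W1. h1 x < ?w" "\<forall>x\<in>V-W1. \<forall>y\<in>V-W1. P1 x y \<longrightarrow> h1 x < h1 y"
    using height_exists[OF fin W2, of E P1] sym P1 by blast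
  obtain h2 where h2: "\<forall>x\<in>V-W1. h2 x < ?w" "\<forall>x\<in>V-W1. \<forall>y\<in>V-W1. P2 x y \<longrightarrow> h2 x < h2 y"
    using height_exists[OF fin W2, of E P2] sym P2 by blast
  obtain h3 where h3: "\<forall>x\<in>V-W1. h3 x < ?w" "\<forall>x\<in>V-W1. \<forall>y\<in>V-W1. P3 x y \<longrightarrow> h3 x < h3 y"
    using height_exists[OF fin W2, of E P3] sym P3 by blast
  define c where "c x = (if x \<in> W1 then h0 x else ?w + (h1 x + ?w * (h2 x + ?w * h3 x)))" for x
  have bnd: "c x < ?w ^ 3 + ?w" if "x \<in> V" for x
  proof (cases "x \<in> W1")
    case True thus ?thesis unfolding c_def using h0 by auto
  next
    case False
    hence xv: "x \<in> V - W1" using that by auto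
    have "h2 x + ?w * h3 x < ?w * ?w" using mixed_lt h2(1) h3(1) xv by blast
    hence "h1 x + ?w * (h2 x + ?w * h3 x) < ?w * (?w * ?w)" using mixed_lt h1(1) xv by blast
    thus ?thesis unfolding c_def using False by (simp add: power3_eq_cube)
  qed
  have cprop: "c x \<noteq> c y" if "x \<in> V" "y \<in> V" "x \<noteq> y" "E x y" for x y
  proof (cases "x \<in> W1")
    case xw: True
    show ?thesis
    proof (cases "y \<in> W1")
      case True
      thus ?thesis using cov0[OF xw True that(3,4)] h0 xw unfolding c_def by fastforce
    next
      case False thus ?thesis using xw h0 unfolding c_def by fastforce
    qed
  next
    case xw: False
    show ?thesis
    proof (cases "y \<in> W1")
      case True thus ?thesis using xw h0 unfolding c_def by fastforce
    next
      case yw: False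
      have xv: "x \<in> V - W1" and yv: "y \<in> V - W1" using xw yw that by auto
      show ?thesis
      proof
        assume "c x = c y"
        hence eq: "h1 x + ?w * (h2 x + ?w * h3 x) = h1 y + ?w * (h2 y + ?w * h3 y)"
          unfolding c_def using xw yw by simp
        have e1: "h1 x = h1 y" and e23: "h2 x + ?w * h3 x = h2 y + ?w * h3 y"
          using mixed_inj[OF _ _ eq] h1(1) xv yv by blast+
        have e2: "h2 x = h2 y" and e3: "h3 x = h3 y"
          using mixed_inj[OF _ _ e23] h2(1) xv yv by blast+
        from cov[OF xv yv that(3,4)] show False
          using e1 e2 e3 h1(2) h2(2) h3(2) xv yv by fastforce
      qed
    qed
  qed
  show ?thesis using bnd cprop by blast
qed

lemma chromatic_le:
  assumes "\<forall>x\<in>V. c x < k" "\<forall>x\<in>V. \<forall>y\<in>V. x \<noteq> y \<and> E x y \<longrightarrow> c x \<noteq> c y"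
  shows "chromatic_number V E \<le> k"
  unfolding chromatic_number_def by (rule Least_le) (use assms in blast)


lemma sign_const:
  fixes g :: "real \<Rightarrow> real"
  assumes cont: "continuous_on UNIV g"
    and conv: "\<And>a b x. a \<in> S \<Longrightarrow> b \<in> S \<Longrightarrow> a \<le> x \<Longrightarrow> x \<le> b \<Longrightarrow> x \<in> S"
    and z: "z \<in> S" "g z < 0" and nz: "\<And>x. x \<in> S \<Longrightarrow> g x \<noteq> 0" and x: "x \<in> S"
  shows "g x < 0"
proof (rule ccontr)
  assume "\<not> g x < 0"
  hence gx: "g x > 0" using nz[OF x] by linarith
  have c: "continuous_on {a..b} g" for a b using cont continuous_on_subset by blast
  show False
  proof (cases "z \<le> x")
    case True
    obtain y where "z \<le> y" "y \<le> x" "g y = 0" using IVT'[of g z 0 x] z gx True c by force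
    thus False using nz conv[OF z(1) x] by blast
  next
    case False
    obtain y where "x \<le> y" "y \<le> z" "g y = 0" using IVT2'[of g z 0 x] z gx False c by force
    thus False using nz conv[OF x z(1)] by blast
  qed
qed

record lens =
  isL :: bool
  key :: real
  fa :: "real \<Rightarrow> real"
  fb :: "real \<Rightarrow> real"

definition ldom :: "lens \<Rightarrow> real set" where
  "ldom l = (if isL l then {..key l} else {key l..})"

definition lset :: "lens \<Rightarrow> (real^2) set" where
  "lset l = {p. p$1 \<in> ldom l \<and> (p$2 = fa l (p$1) \<or> p$2 = fb l (p$1))}"

definition lensok :: "lens \<Rightarrow> bool" where
  "lensok l \<longleftrightarrow> continuous_on UNIV (fa l) \<and> continuous_on UNIV (fb l) \<and> fa l (key l) = fb l (key l)"

definition lo :: "lens \<Rightarrow> real \<Rightarrow> real" where "lo l x = min (fa l x) (fb l x)"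
definition hi :: "lens \<Rightarrow> real \<Rightarrow> real" where "hi l x = max (fa l x) (fb l x)"

definition below :: "lens \<Rightarrow> lens \<Rightarrow> bool" where
  "below l m \<longleftrightarrow> (\<forall>x \<in> ldom l \<inter> ldom m. hi l x < lo m x)"

definition nested :: "lens \<Rightarrow> lens \<Rightarrow> bool" where
  "nested l m \<longleftrightarrow> ldom l \<subseteq> ldom m \<and> (\<forall>x\<in>ldom l. lo m x < lo l x \<and> hi l x < hi m x)"

definition typeok :: "lens \<Rightarrow> lens \<Rightarrow> bool" where
  "typeok l m \<longleftrightarrow> (isL l = isL m \<and> key m \<le> key l) \<or> (\<not> isL l \<and> isL m)"

lemma key_dom: "key l \<in> ldom l" unfolding ldom_def by auto

lemma lo_le_hi: "lo l x \<le> hi l x" unfolding lo_def hi_def by auto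

lemma lset_bounds: "p \<in> lset l \<Longrightarrow> p$1 \<in> ldom l \<and> lo l (p$1) \<le> p$2 \<and> p$2 \<le> hi l (p$1)
   \<and> (p$2 = lo l (p$1) \<or> p$2 = hi l (p$1))"
  unfolding lset_def lo_def hi_def by auto

lemma below_disj: "below l m \<Longrightarrow> lset l \<inter> lset m = {}"
  unfolding below_def using lset_bounds
  by (smt (verit, ccfv_SIG) disjoint_iff IntI)

lemma nested_disj: "nested l m \<Longrightarrow> lset l \<inter> lset m = {}"
proof -
  assume n: "nested l m"
  { fix p assume p: "p \<in> lset l" "p \<in> lset m"
    have "p$1 \<in> ldom l" using lset_bounds[OF p(1)] by auto
    hence "lo m (p$1) < lo l (p$1) \<and> hi l (p$1) < hi m (p$1)" using n unfolding nested_def by auto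
    hence False using lset_bounds[OF p(1)] lset_bounds[OF p(2)] by linarith }
  thus ?thesis by blast
qed

lemma below_irrefl: "\<not> below l l"
  unfolding below_def using key_dom[of l] lo_le_hi[of l "key l"] by (meson IntI not_less)

lemma nested_irrefl: "\<not> nested l l"
  unfolding nested_def using key_dom[of l] by force

lemma typeok_trans: "typeok l m \<Longrightarrow> typeok m n \<Longrightarrow> typeok l n \<and> ldom l \<inter> ldom n \<subseteq> ldom m"
  unfolding typeok_def ldom_def by (auto split: if_splits)

lemma below_trans: "below l m \<Longrightarrow> below m n \<Longrightarrow> typeok l m \<Longrightarrow> typeok m n \<Longrightarrow> below l n"
proof -
  assume a: "below l m" "below m n" "typeok l m" "typeok m n"
  have sub: "ldom l \<inter> ldom n \<subseteq> ldom m" using typeok_trans[OF a(3,4)] by blast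
  show ?thesis unfolding below_def
  proof
    fix x assume x: "x \<in> ldom l \<inter> ldom n"
    hence "x \<in> ldom m" using sub by blast
    thus "hi l x < lo n x" using a(1,2) x lo_le_hi[of m x] unfolding below_def by force
  qed
qed

lemma below_trans2: "below m l \<Longrightarrow> below n m \<Longrightarrow> typeok l m \<Longrightarrow> typeok m n \<Longrightarrow> below n l"
proof -
  assume a: "below m l" "below n m" "typeok l m" "typeok m n"
  have sub: "ldom l \<inter> ldom n \<subseteq> ldom m" using typeok_trans[OF a(3,4)] by blast
  show ?thesis unfolding below_def
  proof
    fix x assume x: "x \<in> ldom n \<inter> ldom l"
    hence "x \<in> ldom m" using sub by blast
    thus "hi n x < lo l x" using a(1,2) x lo_le_hi[of m x] unfolding below_def by force
  qed
qed

lemma nested_trans: "nested l m \<Longrightarrow> nested m n \<Longrightarrow> nested l n"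
  unfolding nested_def by (meson order_trans subsetD order.strict_trans)

lemma below_cover: "below l m \<Longrightarrow> typeok l m \<or> typeok m l"
  unfolding typeok_def by auto

lemma J_conv: "a \<in> ldom l \<inter> ldom m \<Longrightarrow> b \<in> ldom l \<inter> ldom m \<Longrightarrow> a \<le> x \<Longrightarrow> x \<le> b \<Longrightarrow>
   x \<in> ldom l \<inter> ldom m"
  unfolding ldom_def by (auto split: if_splits)

lemma J_key: "ldom l \<inter> ldom m \<noteq> {} \<Longrightarrow> key l \<in> ldom l \<inter> ldom m \<or> key m \<in> ldom l \<inter> ldom m"
  unfolding ldom_def by (auto split: if_splits)

lemma J_sub: "key l \<in> ldom l \<inter> ldom m \<Longrightarrow> key m \<notin> ldom l \<inter> ldom m \<Longrightarrow> ldom l \<subseteq> ldom m"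
  unfolding ldom_def by (auto split: if_splits)

lemma cont_lo: "lensok l \<Longrightarrow> continuous_on UNIV (lo l)"
  unfolding lensok_def lo_def by (auto intro!: continuous_intros)
lemma cont_hi: "lensok l \<Longrightarrow> continuous_on UNIV (hi l)"
  unfolding lensok_def hi_def by (auto intro!: continuous_intros)

lemma disj_vals:
  assumes "lset l \<inter> lset m = {}" "x \<in> ldom l \<inter> ldom m"
  shows "lo l x \<noteq> lo m x \<and> lo l x \<noteq> hi m x \<and> hi l x \<noteq> lo m x \<and> hi l x \<noteq> hi m x \<and>
         lo m x \<noteq> lo l x \<and> hi m x \<noteq> lo l x \<and> lo m x \<noteq> hi l x \<and> hi m x \<noteq> hi l x"
proof -
  have mem: "vector [x, y] \<in> lset n" if "y = fa n x \<or> y = fb n x" "x \<in> ldom n" for y n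
    using that unfolding lset_def by auto
  have "lo n x = fa n x \<or> lo n x = fb n x" "hi n x = fa n x \<or> hi n x = fb n x" for n
    unfolding lo_def hi_def by linarith+
  hence "vector [x, lo n x] \<in> lset n" "vector [x, hi n x] \<in> lset n" if "x \<in> ldom n" for n
    using mem that by blast+
  hence "vector [x, lo l x] \<in> lset l" "vector [x, hi l x] \<in> lset l"
     "vector [x, lo m x] \<in> lset m" "vector [x, hi m x] \<in> lset m" using assms(2) by auto
  thus ?thesis using assms(1) by (metis disjoint_iff)
qed

lemma classify1:
  assumes ok: "lensok l" "lensok m" and dj: "lset l \<inter> lset m = {}"
    and k: "key l \<in> ldom l \<inter> ldom m"
  shows "below l m \<or> below m l \<or> nested l m"
proof -
  let ?J = "ldom l \<inter> ldom m" and ?z = "key l"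
  have eq: "lo l ?z = hi l ?z" using ok(1) unfolding lensok_def lo_def hi_def by simp
  note dv = disj_vals[OF dj]
  have conv: "\<And>a b x. a \<in> ?J \<Longrightarrow> b \<in> ?J \<Longrightarrow> a \<le> x \<Longrightarrow> x \<le> b \<Longrightarrow> x \<in> ?J"
    using J_conv by blast
  have cl: "continuous_on UNIV (lo l)" "continuous_on UNIV (hi l)"
    "continuous_on UNIV (lo m)" "continuous_on UNIV (hi m)"
    using cont_lo cont_hi ok by auto
  have cd: "continuous_on UNIV (\<lambda>x. f x - g x)" if "continuous_on UNIV f" "continuous_on UNIV g"
    for f g :: "real \<Rightarrow> real" using that by (intro continuous_intros)
  show ?thesis
  proof (cases "hi l ?z < lo m ?z")
    case True
    have "hi l x - lo m x < 0" if "x \<in> ?J" for x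
      by (rule sign_const[where S="?J" and z="?z", OF cd[OF cl(2) cl(3)] conv k])
        (use True dv that in auto)
    hence "below l m" unfolding below_def by force
    thus ?thesis by simp
  next
    case c1: False
    show ?thesis
    proof (cases "hi m ?z < lo l ?z")
      case True
      have "hi m x - lo l x < 0" if "x \<in> ?J" for x
        by (rule sign_const[where S="?J" and z="?z", OF cd[OF cl(4) cl(1)] conv k])
          (use True dv that in auto)
      hence "below m l" unfolding below_def by force
      thus ?thesis by simp
    next
      case c2: False
      have z1: "lo m ?z < lo l ?z" using c1 eq dv[OF k] by linarith
      have z2: "hi l ?z < hi m ?z" using c2 eq dv[OF k] by linarith
      have A: "lo m x - lo l x < 0" if "x \<in> ?J" for x
        by (rule sign_const[where S="?J" and z="?z", OF cd[OF cl(3) cl(1)] conv k])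
          (use z1 dv that in auto)
      have B: "hi l x - hi m x < 0" if "x \<in> ?J" for x
        by (rule sign_const[where S="?J" and z="?z", OF cd[OF cl(2) cl(4)] conv k])
          (use z2 dv that in auto)
      have "key m \<notin> ?J"
      proof
        assume km: "key m \<in> ?J"
        have "lo m (key m) = hi m (key m)" using ok(2) unfolding lensok_def lo_def hi_def by simp
        thus False using A[OF km] B[OF km] lo_le_hi[of l "key m"] by linarith
      qed
      hence sub: "ldom l \<subseteq> ldom m" using J_sub k by blast
      have "nested l m" unfolding nested_def using sub A B by force
      thus ?thesis by simp
    qed
  qed
qed

lemma classify:
  assumes ok: "lensok l" "lensok m" and dj: "lset l \<inter> lset m = {}"
  shows "below l m \<or> below m l \<or> nested l m \<or> nested m l"
proof (cases "ldom l \<inter> ldom m = {}")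
  case True thus ?thesis unfolding below_def by auto
next
  case False
  then consider "key l \<in> ldom l \<inter> ldom m" | "key m \<in> ldom m \<inter> ldom l" using J_key by blast
  thus ?thesis
  proof cases
    case 1 thus ?thesis using classify1[OF ok dj] by blast
  next
    case 2 thus ?thesis using classify1[OF ok(2,1)] dj by (metis Int_commute)
  qed
qed


definition chain :: "real^2 \<Rightarrow> real^2 \<Rightarrow> real^2 \<Rightarrow> real^2 \<Rightarrow> (real^2) set" where
  "chain a b u v = half_line a u \<union> closed_segment a b \<union> half_line b v"

lemma chain_swap: "chain a b u v = chain b a v u"
  unfolding chain_def by (auto simp: closed_segment_commute)

definition lf :: "real^2 \<Rightarrow> real^2 \<Rightarrow> real \<Rightarrow> real" where
  "lf a w x = a$2 + (x - a$1) * (w$2 / w$1)"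

lemma lf_base[simp]: "lf a w (a$1) = a$2" unfolding lf_def by simp

lemma vec2_eq: "(p::real^2) = q \<longleftrightarrow> p$1 = q$1 \<and> p$2 = q$2"
  by (simp add: vec_eq_iff forall_2)

lemma half_line_graph_neg:
  assumes "u$1 < 0"
  shows "half_line a u = {p. p$1 \<le> a$1 \<and> p$2 = lf a u (p$1)}"
proof (intro set_eqI iffI)
  fix p assume "p \<in> half_line a u"
  then obtain t where t: "t \<ge> 0" "p = a + t *\<^sub>R u" unfolding half_line_def by auto
  have "t * u$1 \<le> 0" using t(1) assms by (simp add: mult_nonneg_nonpos)
  moreover have "a$2 + t * u$2 = a$2 + (t * u$1) * (u$2 / u$1)" using assms by simp
  ultimately show "p \<in> {p. p$1 \<le> a$1 \<and> p$2 = lf a u (p$1)}"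
    using t unfolding lf_def by simp
next
  fix p :: "real^2" assume p: "p \<in> {p. p$1 \<le> a$1 \<and> p$2 = lf a u (p$1)}"
  define t where "t = (p$1 - a$1) / u$1"
  have t0: "t \<ge> 0" unfolding t_def using p assms by (simp add: divide_nonpos_neg)
  have "p = a + t *\<^sub>R u" unfolding vec2_eq t_def using p assms by (simp add: lf_def field_simps)
  thus "p \<in> half_line a u" unfolding half_line_def using t0 by auto
qed

lemma half_line_graph_pos:
  assumes "u$1 > 0"
  shows "half_line a u = {p. a$1 \<le> p$1 \<and> p$2 = lf a u (p$1)}"
proof (intro set_eqI iffI)
  fix p assume "p \<in> half_line a u"
  then obtain t where t: "t \<ge> 0" "p = a + t *\<^sub>R u" unfolding half_line_def by auto
  have "t * u$1 \<ge> 0" using t(1) assms by simp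
  moreover have "a$2 + t * u$2 = a$2 + (t * u$1) * (u$2 / u$1)" using assms by simp
  ultimately show "p \<in> {p. a$1 \<le> p$1 \<and> p$2 = lf a u (p$1)}"
    using t unfolding lf_def by simp
next
  fix p :: "real^2" assume p: "p \<in> {p. a$1 \<le> p$1 \<and> p$2 = lf a u (p$1)}"
  define t where "t = (p$1 - a$1) / u$1"
  have t0: "t \<ge> 0" unfolding t_def using p assms by simp
  have "p = a + t *\<^sub>R u" unfolding vec2_eq t_def using p assms by (simp add: lf_def field_simps)
  thus "p \<in> half_line a u" unfolding half_line_def using t0 by auto
qed

lemma segment_graph:
  assumes "a$1 < b$1"
  shows "closed_segment a b = {p. a$1 \<le> p$1 \<and> p$1 \<le> b$1 \<and> p$2 = lf a (b - a) (p$1)}"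
proof (intro set_eqI iffI)
  fix p assume "p \<in> closed_segment a b"
  then obtain t where t: "0 \<le> t" "t \<le> 1" "p = (1 - t) *\<^sub>R a + t *\<^sub>R b"
    unfolding closed_segment_def by auto
  have "p$1 = (1-t)*a$1 + t*b$1" "p$2 = (1-t)*a$2 + t*b$2" using t(3) by simp_all
  hence e1: "p$1 = a$1 + t * (b$1 - a$1)" and e2: "p$2 = a$2 + t * (b$2 - a$2)"
    by (simp_all add: algebra_simps)
  have "t * (b$1 - a$1) \<ge> 0" "t * (b$1 - a$1) \<le> b$1 - a$1" using t assms
    by (simp_all add: mult_left_le)
  moreover have "a$2 + t * (b$2 - a$2) = a$2 + (t * (b$1 - a$1)) * ((b$2 - a$2) / (b$1 - a$1))"
    using assms by simp
  ultimately show "p \<in> {p. a$1 \<le> p$1 \<and> p$1 \<le> b$1 \<and> p$2 = lf a (b - a) (p$1)}"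
    using e1 e2 unfolding lf_def by simp
next
  fix p :: "real^2" assume p: "p \<in> {p. a$1 \<le> p$1 \<and> p$1 \<le> b$1 \<and> p$2 = lf a (b - a) (p$1)}"
  define t where "t = (p$1 - a$1) / (b$1 - a$1)"
  have t0: "t \<ge> 0" "t \<le> 1" unfolding t_def using p assms by simp_all
  have d1: "t * (b$1 - a$1) = p$1 - a$1" unfolding t_def using assms by simp
  have d2: "t * (b$2 - a$2) = (p$1 - a$1) * ((b$2 - a$2) / (b$1 - a$1))" unfolding t_def by simp
  have "(1-t)*a$1 + t*b$1 = a$1 + t*(b$1-a$1)" "(1-t)*a$2 + t*b$2 = a$2 + t*(b$2-a$2)"
    by (simp_all add: algebra_simps)
  hence "p = (1 - t) *\<^sub>R a + t *\<^sub>R b" unfolding vec2_eq using p d1 d2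
    by (simp add: lf_def)
  thus "p \<in> closed_segment a b" unfolding closed_segment_def using t0 by auto
qed

lemma lf_same_line: "a$1 \<noteq> b$1 \<Longrightarrow> lf b (a - b) x = lf a (a - b) x"
proof -
  assume ne: "a$1 \<noteq> b$1"
  define s where "s = (a$2 - b$2) / (a$1 - b$1)"
  have h: "(a$1 - b$1) * s = a$2 - b$2" using ne by (simp add: s_def)
  have e: "(x - b$1) * s = (x - a$1) * s + (a$1 - b$1) * s" by (simp add: algebra_simps)
  have "b$2 + (x - b$1) * s = a$2 + (x - a$1) * s" using h e by linarith
  thus ?thesis unfolding lf_def s_def by simp
qed

lemma segment_graph':
  assumes "b$1 < a$1"
  shows "closed_segment a b = {p. b$1 \<le> p$1 \<and> p$1 \<le> a$1 \<and> p$2 = lf a (a - b) (p$1)}"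
  using segment_graph[OF assms] lf_same_line[of a b] assms
  by (simp add: closed_segment_commute)

definition LLlens :: "real^2 \<Rightarrow> real^2 \<Rightarrow> real^2 \<Rightarrow> real^2 \<Rightarrow> lens" where
  "LLlens a b u v = \<lparr>isL = True, key = b$1, fa = lf b v,
     fb = (\<lambda>x. a$2 + (min x (a$1) - a$1) * (u$2/u$1) + (max x (a$1) - a$1) * ((b-a)$2/(b-a)$1))\<rparr>"

lemma LLlens:
  assumes "u$1 < 0" "v$1 < 0" "a$1 < b$1"
  shows "lensok (LLlens a b u v) \<and> isL (LLlens a b u v) \<and> lset (LLlens a b u v) = chain a b u v"
proof -
  let ?L = "LLlens a b u v"
  let ?g = "fb ?L"
  have gl: "x \<le> a$1 \<Longrightarrow> ?g x = lf a u x" for x unfolding LLlens_def lf_def by simp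
  have gr: "a$1 \<le> x \<Longrightarrow> ?g x = lf a (b - a) x" for x unfolding LLlens_def lf_def by simp
  have ok: "lensok ?L"
    unfolding lensok_def using gr[of "b$1"] assms
    by (auto simp: LLlens_def lf_def intro!: continuous_intros)
  have L: "isL ?L" "key ?L = b$1" "fa ?L = lf b v" by (simp_all add: LLlens_def)
  have "lset ?L = chain a b u v"
  proof (intro set_eqI)
    fix p :: "real^2"
    have m1: "p \<in> lset ?L \<longleftrightarrow> p$1 \<le> b$1 \<and> (p$2 = lf b v (p$1) \<or> p$2 = ?g (p$1))"
      unfolding lset_def ldom_def using L by simp
    have m2: "p \<in> chain a b u v \<longleftrightarrow> (p$1 \<le> a$1 \<and> p$2 = lf a u (p$1)) \<or>
       (a$1 \<le> p$1 \<and> p$1 \<le> b$1 \<and> p$2 = lf a (b - a) (p$1)) \<or> (p$1 \<le> b$1 \<and> p$2 = lf b v (p$1))"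
      unfolding chain_def half_line_graph_neg[OF assms(1)] half_line_graph_neg[OF assms(2)]
          segment_graph[OF assms(3)] by blast
    show "p \<in> lset ?L \<longleftrightarrow> p \<in> chain a b u v"
    proof (cases "p$1 < a$1")
      case True
      have "?g (p$1) = lf a u (p$1)" using gl True by simp
      thus ?thesis unfolding m1 m2 using True assms by auto
    next
      case False
      have g1: "?g (p$1) = lf a (b - a) (p$1)" using gr False by simp
      show ?thesis
      proof (cases "p$1 = a$1")
        case True
        have "?g (a$1) = a$2" using g1 True by simp
        thus ?thesis unfolding m1 m2 True using assms by auto
      next
        case F2: False
        thus ?thesis unfolding m1 m2 using g1 False assms by auto
      qed
    qed
  qed
  thus ?thesis using ok L by simp
qed

definition RRlens :: "real^2 \<Rightarrow> real^2 \<Rightarrow> real^2 \<Rightarrow> real^2 \<Rightarrow> lens" where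
  "RRlens a b u v = \<lparr>isL = False, key = b$1, fa = lf b v,
     fb = (\<lambda>x. a$2 + (max x (a$1) - a$1) * (u$2/u$1) + (min x (a$1) - a$1) * ((a-b)$2/(a-b)$1))\<rparr>"

lemma RRlens:
  assumes "u$1 > 0" "v$1 > 0" "b$1 < a$1"
  shows "lensok (RRlens a b u v) \<and> \<not> isL (RRlens a b u v) \<and> lset (RRlens a b u v) = chain a b u v"
proof -
  let ?L = "RRlens a b u v"
  let ?g = "fb ?L"
  have gl: "a$1 \<le> x \<Longrightarrow> ?g x = lf a u x" for x unfolding RRlens_def lf_def by simp
  have gr: "x \<le> a$1 \<Longrightarrow> ?g x = lf a (a - b) x" for x unfolding RRlens_def lf_def by simp
  have gb: "lf a (a - b) (b$1) = b$2" using lf_same_line[of a b "b$1"] assms by (simp add: lf_def)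
  have ok: "lensok ?L"
    unfolding lensok_def using gr[of "b$1"] gb assms
    by (auto simp: RRlens_def lf_def intro!: continuous_intros)
  have L: "\<not> isL ?L" "key ?L = b$1" "fa ?L = lf b v" by (simp_all add: RRlens_def)
  have "lset ?L = chain a b u v"
  proof (intro set_eqI)
    fix p :: "real^2"
    have m1: "p \<in> lset ?L \<longleftrightarrow> b$1 \<le> p$1 \<and> (p$2 = lf b v (p$1) \<or> p$2 = ?g (p$1))"
      unfolding lset_def ldom_def using L by simp
    have m2: "p \<in> chain a b u v \<longleftrightarrow> (a$1 \<le> p$1 \<and> p$2 = lf a u (p$1)) \<or>
       (b$1 \<le> p$1 \<and> p$1 \<le> a$1 \<and> p$2 = lf a (a - b) (p$1)) \<or> (b$1 \<le> p$1 \<and> p$2 = lf b v (p$1))"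
      unfolding chain_def half_line_graph_pos[OF assms(1)] half_line_graph_pos[OF assms(2)]
          segment_graph'[OF assms(3)] by blast
    show "p \<in> lset ?L \<longleftrightarrow> p \<in> chain a b u v"
    proof (cases "a$1 < p$1")
      case True
      have "?g (p$1) = lf a u (p$1)" using gl True by simp
      thus ?thesis unfolding m1 m2 using True assms by auto
    next
      case False
      have g1: "?g (p$1) = lf a (a - b) (p$1)" using gr False by simp
      show ?thesis
      proof (cases "p$1 = a$1")
        case True
        have "?g (a$1) = a$2" using g1 True by simp
        thus ?thesis unfolding m1 m2 True using assms by auto
      next
        case F2: False
        thus ?thesis unfolding m1 m2 using g1 False assms by auto
      qed
    qed
  qed
  thus ?thesis using ok L by simp
qed


abbreviation pt :: "real \<Rightarrow> real \<Rightarrow> real^2" where "pt x y \<equiv> vector [x, y]"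

lemma vec2_eq': "(p::real^2) = q \<longleftrightarrow> p$1 = q$1 \<and> p$2 = q$2"
  by (simp add: vec_eq_iff forall_2)

lemma inbox: "z \<in> cbox (pt a1 a2) (pt b1 b2) \<longleftrightarrow> a1 \<le> z$1 \<and> z$1 \<le> b1 \<and> a2 \<le> z$2 \<and> z$2 \<le> b2"
  by (simp add: mem_box_cart forall_2)

lemma seg_coord:
  assumes "(z::real^2) \<in> closed_segment p q"
  shows "min (p$i) (q$i) \<le> z$i \<and> z$i \<le> max (p$i) (q$i)"
proof -
  obtain t where t: "0 \<le> t" "t \<le> 1" "z = (1 - t) *\<^sub>R p + t *\<^sub>R q"
    using assms unfolding closed_segment_def by auto
  have e: "z$i = (1 - t) * p$i + t * q$i" using t(3) by simp
  have "(1 - t) * min (p$i) (q$i) \<le> (1 - t) * p$i" "t * min (p$i) (q$i) \<le> t * q$i"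
    "(1 - t) * p$i \<le> (1 - t) * max (p$i) (q$i)" "t * q$i \<le> t * max (p$i) (q$i)"
    using t by (auto intro!: mult_left_mono)
  moreover have "(1 - t) * m + t * m = m" for m :: real by (simp add: algebra_simps)
  ultimately show ?thesis unfolding e by (metis add_mono)
qed

lemma seg_hor:
  "z \<in> closed_segment (pt x1 y) (pt x2 y) \<Longrightarrow> x1 \<le> x2 \<Longrightarrow> z$2 = y \<and> x1 \<le> z$1 \<and> z$1 \<le> x2"
  using seg_coord[of z "pt x1 y" "pt x2 y" 1] seg_coord[of z "pt x1 y" "pt x2 y" 2] by simp

lemma seg_hor':
  "z \<in> closed_segment (pt x2 y) (pt x1 y) \<Longrightarrow> x1 \<le> x2 \<Longrightarrow> z$2 = y \<and> x1 \<le> z$1 \<and> z$1 \<le> x2"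
  using seg_hor[of z x1 y x2] by (simp add: closed_segment_commute)

lemma seg_ver:
  "z \<in> closed_segment (pt x y1) (pt x y2) \<Longrightarrow> y1 \<le> y2 \<Longrightarrow> z$1 = x \<and> y1 \<le> z$2 \<and> z$2 \<le> y2"
  using seg_coord[of z "pt x y1" "pt x y2" 1] seg_coord[of z "pt x y1" "pt x y2" 2] by simp

lemma seg_in_box:
  assumes "p \<in> cbox a b" "q \<in> cbox a b"
  shows "closed_segment p q \<subseteq> cbox a b"
  using closed_segment_subset[OF assms convex_box(1)] .

lemma cross:
  fixes f g :: "real \<Rightarrow> real^2"
  assumes M: "0 < M" and pf: "path f" and pg: "path g"
    and bf: "path_image f \<subseteq> cbox (pt (-M) (-H)) (pt M H)"
    and bg: "path_image g \<subseteq> cbox (pt (-M) (-H)) (pt M H)"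
    and sf: "pathstart f = pt (-M) l" and ff: "pathfinish f = pt M r"
    and sg: "pathstart g = pt (-M) q1" and fg: "pathfinish g = pt (-M) q2"
    and q: "q1 < l" "l < q2"
  shows "\<exists>z. z \<in> path_image f \<and> z \<in> path_image g"
proof -
  have fbox: "z \<in> path_image f \<Longrightarrow> -M \<le> z$1 \<and> z$1 \<le> M \<and> -H \<le> z$2 \<and> z$2 \<le> H" for z
    using bf inbox by blast
  have gbox: "z \<in> path_image g \<Longrightarrow> -M \<le> z$1 \<and> z$1 \<le> M \<and> -H \<le> z$2 \<and> z$2 \<le> H" for z
    using bg inbox by blast
  have ls: "pt (-M) l \<in> path_image f" using sf pathstart_in_path_image by metis
  have rs: "pt M r \<in> path_image f" using ff pathfinish_in_path_image by metis
  have q1s: "pt (-M) q1 \<in> path_image g" using sg pathstart_in_path_image by metis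
  have q2s: "pt (-M) q2 \<in> path_image g" using fg pathfinish_in_path_image by metis
  have bl: "-H \<le> l \<and> l \<le> H" "-H \<le> r \<and> r \<le> H" "-H \<le> q1 \<and> q1 \<le> H" "-H \<le> q2 \<and> q2 \<le> H"
    using fbox[OF ls] fbox[OF rs] gbox[OF q1s] gbox[OF q2s] by auto
  define A where "A = pt (-M-1) (-H-1)"
  define B where "B = pt (M+1) (H+1)"
  define f' where "f' = linepath (pt (-M-1) l) (pt (-M) l) +++ (f +++ linepath (pt M r) (pt (M+1) r))"
  define g' where "g' = linepath (pt (-M-1/2) (-H-1)) (pt (-M-1/2) q1) +++
     (linepath (pt (-M-1/2) q1) (pt (-M) q1) +++ (g +++ (linepath (pt (-M) q2) (pt (-M-1/2) q2) +++
      linepath (pt (-M-1/2) q2) (pt (-M-1/2) (H+1)))))"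
  have pf': "path f'" unfolding f'_def using pf sf ff by (auto intro!: path_join_imp)
  have pg': "path g'" unfolding g'_def using pg sg fg by (auto intro!: path_join_imp)
  have imf': "path_image f' = closed_segment (pt (-M-1) l) (pt (-M) l) \<union>
       (path_image f \<union> closed_segment (pt M r) (pt (M+1) r))"
    unfolding f'_def using sf ff by (simp add: path_image_join)
  have img': "path_image g' = closed_segment (pt (-M-1/2) (-H-1)) (pt (-M-1/2) q1) \<union>
     (closed_segment (pt (-M-1/2) q1) (pt (-M) q1) \<union> (path_image g \<union>
      (closed_segment (pt (-M) q2) (pt (-M-1/2) q2) \<union> closed_segment (pt (-M-1/2) q2) (pt (-M-1/2) (H+1)))))"
    unfolding g'_def using sg fg by (simp add: path_image_join)
  have sub: "cbox (pt (-M) (-H)) (pt M H) \<subseteq> cbox A B" unfolding A_def B_def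
    using inbox by (auto simp: subset_iff inbox)
  have inAB: "pt x y \<in> cbox A B" if "-M-1 \<le> x" "x \<le> M+1" "-H-1 \<le> y" "y \<le> H+1" for x y
    unfolding A_def B_def inbox using that by simp
  have bf': "path_image f' \<subseteq> cbox A B"
    unfolding imf' using bf sub bl M
    by (intro Un_least seg_in_box inAB order_trans[OF bf sub]) auto
  have bg': "path_image g' \<subseteq> cbox A B"
    unfolding img' using bg sub bl M
    by (intro Un_least seg_in_box inAB order_trans[OF bg sub]) auto
  obtain z where zf': "z \<in> path_image f'" and zg': "z \<in> path_image g'"
    apply (rule fashoda[OF pf' pg' bf' bg'])
    unfolding f'_def g'_def A_def B_def using sf ff sg fg by auto
  have h1: "z \<in> closed_segment (pt (-M-1) l) (pt (-M) l) \<Longrightarrow> z$2 = l \<and> -M-1 \<le> z$1 \<and> z$1 \<le> -M"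
    by (rule seg_hor) simp_all
  have h2: "z \<in> closed_segment (pt M r) (pt (M+1) r) \<Longrightarrow> z$2 = r \<and> M \<le> z$1 \<and> z$1 \<le> M+1"
    by (rule seg_hor) simp_all
  have zf: "(z$2 = l \<and> -M-1 \<le> z$1 \<and> z$1 \<le> -M) \<or> z \<in> path_image f \<or> (z$2 = r \<and> M \<le> z$1 \<and> z$1 \<le> M+1)"
    using zf' h1 h2 unfolding imf' by blast
  have k1: "z \<in> closed_segment (pt (-M-1/2) (-H-1)) (pt (-M-1/2) q1) \<Longrightarrow> z$1 = -M-1/2 \<and> -H-1 \<le> z$2 \<and> z$2 \<le> q1"
    by (rule seg_ver) (use bl in simp_all)
  have k2: "z \<in> closed_segment (pt (-M-1/2) q1) (pt (-M) q1) \<Longrightarrow> z$2 = q1 \<and> -M-1/2 \<le> z$1 \<and> z$1 \<le> -M"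
    by (rule seg_hor) simp_all
  have k3: "z \<in> closed_segment (pt (-M) q2) (pt (-M-1/2) q2) \<Longrightarrow> z$2 = q2 \<and> -M-1/2 \<le> z$1 \<and> z$1 \<le> -M"
    by (rule seg_hor') simp_all
  have k4: "z \<in> closed_segment (pt (-M-1/2) q2) (pt (-M-1/2) (H+1)) \<Longrightarrow> z$1 = -M-1/2 \<and> q2 \<le> z$2 \<and> z$2 \<le> H+1"
    by (rule seg_ver) (use bl in simp_all)
  have zg: "(z$1 = -M-1/2 \<and> -H-1 \<le> z$2 \<and> z$2 \<le> q1) \<or> (z$2 = q1 \<and> -M-1/2 \<le> z$1 \<and> z$1 \<le> -M) \<or>
     z \<in> path_image g \<or> (z$2 = q2 \<and> -M-1/2 \<le> z$1 \<and> z$1 \<le> -M) \<or> (z$1 = -M-1/2 \<and> q2 \<le> z$2 \<and> z$2 \<le> H+1)"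
    using zg' k1 k2 k3 k4 unfolding img' by blast
  show ?thesis
  proof (cases "z \<in> path_image f")
    case zf1: True
    show ?thesis
    proof (cases "z \<in> path_image g")
      case True thus ?thesis using zf1 by blast
    next
      case False
      hence "(z$2 = q1 \<and> z$1 = -M) \<or> (z$2 = q2 \<and> z$1 = -M)"
        using zg fbox[OF zf1] by auto
      hence "z = pt (-M) q1 \<or> z = pt (-M) q2" unfolding vec2_eq' by auto
      thus ?thesis using zf1 q1s q2s by blast
    qed
  next
    case zf0: False
    hence zg1: "z \<in> path_image g" using zf zg q M by auto
    hence "(z$2 = l \<and> z$1 = -M) \<or> (z$2 = r \<and> z$1 = M)"
      using zf zf0 gbox[OF zg1] by auto
    hence "z = pt (-M) l \<or> z = pt M r" unfolding vec2_eq' by auto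
    thus ?thesis using zg1 ls rs by blast
  qed
qed


lemma convex_half_line: "convex (half_line a u)"
proof (rule convexI)
  fix x y :: "real^2" and s t :: real
  assume x: "x \<in> half_line a u" and y: "y \<in> half_line a u"
    and st: "0 \<le> s" "0 \<le> t" "s + t = 1"
  obtain t1 where t1: "t1 \<ge> 0" "x = a + t1 *\<^sub>R u" using x unfolding half_line_def by auto
  obtain t2 where t2: "t2 \<ge> 0" "y = a + t2 *\<^sub>R u" using y unfolding half_line_def by auto
  have "s *\<^sub>R x + t *\<^sub>R y = (s + t) *\<^sub>R a + (s * t1 + t * t2) *\<^sub>R u"
    unfolding t1 t2 by (simp add: algebra_simps)
  hence "s *\<^sub>R x + t *\<^sub>R y = a + (s * t1 + t * t2) *\<^sub>R u" using st by simp
  moreover have "s * t1 + t * t2 \<ge> 0" using st t1 t2 by simp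
  ultimately show "s *\<^sub>R x + t *\<^sub>R y \<in> half_line a u" unfolding half_line_def by blast
qed

lemma half_line_base: "a \<in> half_line a u"
  unfolding half_line_def by (auto intro: exI[of _ 0])

lemma chain_parts: "half_line a u \<subseteq> chain a b u v" "closed_segment a b \<subseteq> chain a b u v"
  "half_line b v \<subseteq> chain a b u v"
  unfolding chain_def by auto

lemma lf_point_in: "u$1 < 0 \<Longrightarrow> x \<le> a$1 \<Longrightarrow> pt x (lf a u x) \<in> half_line a u"
  unfolding half_line_graph_neg by simp

lemma lf_point_in': "v$1 > 0 \<Longrightarrow> b$1 \<le> x \<Longrightarrow> pt x (lf b v x) \<in> half_line b v"
  unfolding half_line_graph_pos by simp

lemma lf_cont: "continuous_on S (lf a u)"
  unfolding lf_def by (intro continuous_intros)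

lemma lr_sign:
  assumes u: "u$1 < 0" "u'$1 < 0"
    and dj: "chain a b u v \<inter> chain a' b' u' v' = {}"
  shows "(\<forall>x \<le> min (a$1) (a'$1). lf a u x < lf a' u' x) \<or> (\<forall>x \<le> min (a$1) (a'$1). lf a' u' x < lf a u x)"
proof -
  let ?S = "{..min (a$1) (a'$1)}" and ?z = "min (a$1) (a'$1)"
  have ne: "lf a u x \<noteq> lf a' u' x" if "x \<le> ?z" for x
  proof
    assume e: "lf a u x = lf a' u' x"
    have "pt x (lf a u x) \<in> half_line a u" using lf_point_in[OF u(1)] that by simp
    hence "pt x (lf a u x) \<in> chain a b u v" using chain_parts(1) by blast
    moreover have "pt x (lf a' u' x) \<in> half_line a' u'" using lf_point_in[OF u(2)] that by simp
    hence "pt x (lf a u x) \<in> chain a' b' u' v'" using chain_parts(1) e by (metis subsetD)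
    ultimately show False using dj by blast
  qed
  have ne': "lf a' u' x \<noteq> lf a u x" if "x \<le> ?z" for x using ne[OF that] by metis
  have conv: "\<And>a b x. a \<in> ?S \<Longrightarrow> b \<in> ?S \<Longrightarrow> a \<le> x \<Longrightarrow> x \<le> b \<Longrightarrow> x \<in> ?S" by auto
  have c1: "continuous_on UNIV (\<lambda>x. lf a u x - lf a' u' x)" unfolding lf_def by (intro continuous_intros)
  have c2: "continuous_on UNIV (\<lambda>x. lf a' u' x - lf a u x)" unfolding lf_def by (intro continuous_intros)
  show ?thesis
  proof (cases "lf a u ?z < lf a' u' ?z")
    case True
    have "lf a u x - lf a' u' x < 0" if "x \<le> ?z" for x
      by (rule sign_const[where S="?S" and z="?z", OF c1]) (use True ne that in auto)
    thus ?thesis by auto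
  next
    case False
    hence F: "lf a' u' ?z < lf a u ?z" using ne[of ?z] by linarith
    have "lf a' u' x - lf a u x < 0" if "x \<le> ?z" for x
      by (rule sign_const[where S="?S" and z="?z", OF c2]) (use F ne' that in auto)
    thus ?thesis by auto
  qed
qed

lemma path_to_point:
  assumes u: "u$1 < 0" and v: "0 < v$1" and M: "\<bar>a$1\<bar> < M" "\<bar>b$1\<bar> < M"
    and p: "p \<in> chain a b u v"
    and box: "pt (-M) (lf a u (-M)) \<in> cbox (pt (-M) (-H)) (pt M H)" "a \<in> cbox (pt (-M) (-H)) (pt M H)"
        "b \<in> cbox (pt (-M) (-H)) (pt M H)" "p \<in> cbox (pt (-M) (-H)) (pt M H)"
  shows "\<exists>g. path g \<and> path_image g \<subseteq> chain a b u v \<inter> cbox (pt (-M) (-H)) (pt M H) \<and>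
      pathstart g = pt (-M) (lf a u (-M)) \<and> pathfinish g = p"
proof -
  let ?B = "cbox (pt (-M) (-H)) (pt M H)" and ?e = "pt (-M) (lf a u (-M))"
  have e: "?e \<in> half_line a u" using lf_point_in[OF u] M by simp
  have ea: "closed_segment ?e a \<subseteq> chain a b u v \<inter> ?B"
    using closed_segment_subset[OF e half_line_base convex_half_line] chain_parts
      seg_in_box[OF box(1,2)] by blast
  consider "p \<in> half_line a u" | "p \<in> closed_segment a b" | "p \<in> half_line b v"
    using p unfolding chain_def by blast
  thus ?thesis
  proof cases
    case 1
    have "closed_segment ?e p \<subseteq> chain a b u v \<inter> ?B"
      using closed_segment_subset[OF e 1 convex_half_line] chain_parts seg_in_box[OF box(1,4)] by blast
    thus ?thesis by (intro exI[of _ "linepath ?e p"]) auto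
  next
    case 2
    have "closed_segment a p \<subseteq> chain a b u v \<inter> ?B"
      using closed_segment_subset[OF ends_in_segment(1) 2 convex_closed_segment] chain_parts
        seg_in_box[OF box(2,4)] by blast
    thus ?thesis using ea
      by (intro exI[of _ "linepath ?e a +++ linepath a p"]) (auto simp: path_image_join)
  next
    case 3
    have "closed_segment b p \<subseteq> chain a b u v \<inter> ?B"
      using closed_segment_subset[OF half_line_base 3 convex_half_line] chain_parts
        seg_in_box[OF box(3,4)] by blast
    moreover have "closed_segment a b \<subseteq> chain a b u v \<inter> ?B"
      using chain_parts seg_in_box[OF box(2,3)] by blast
    ultimately show ?thesis using ea
      by (intro exI[of _ "linepath ?e a +++ (linepath a b +++ linepath b p)"])
        (auto simp: path_image_join path_join_imp)
  qed
qed

lemma path_across: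
  assumes u: "u$1 < 0" and v: "0 < v$1" and M: "\<bar>a$1\<bar> < M" "\<bar>b$1\<bar> < M"
    and box: "pt (-M) (lf a u (-M)) \<in> cbox (pt (-M) (-H)) (pt M H)" "a \<in> cbox (pt (-M) (-H)) (pt M H)"
        "b \<in> cbox (pt (-M) (-H)) (pt M H)" "pt M (lf b v M) \<in> cbox (pt (-M) (-H)) (pt M H)"
  shows "\<exists>g. path g \<and> path_image g \<subseteq> chain a b u v \<inter> cbox (pt (-M) (-H)) (pt M H) \<and>
      pathstart g = pt (-M) (lf a u (-M)) \<and> pathfinish g = pt M (lf b v M)"
proof -
  have "pt M (lf b v M) \<in> half_line b v" using lf_point_in'[OF v] M by simp
  hence "pt M (lf b v M) \<in> chain a b u v" using chain_parts by blast
  thus ?thesis using path_to_point[OF u v M _ box(1,2,3,4)] by blast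
qed

lemma lr_trans:
  assumes uC: "uC$1 < 0" "0 < vC$1" and uD: "uD$1 < 0" "0 < vD$1" and uE: "uE$1 < 0" "0 < vE$1"
    and dCD: "chain aC bC uC vC \<inter> chain aD bD uD vD = {}"
    and dDE: "chain aD bD uD vD \<inter> chain aE bE uE vE = {}"
    and oCD: "\<forall>x \<le> min (aC$1) (aD$1). lf aC uC x < lf aD uD x"
    and oDE: "\<forall>x \<le> min (aD$1) (aE$1). lf aD uD x < lf aE uE x"
  shows "chain aC bC uC vC \<inter> chain aE bE uE vE = {}"
proof (rule ccontr)
  assume "chain aC bC uC vC \<inter> chain aE bE uE vE \<noteq> {}"
  then obtain p where pC: "p \<in> chain aC bC uC vC" and pE: "p \<in> chain aE bE uE vE" by blast
  define Mx where "Mx = Max {\<bar>aC$1\<bar>, \<bar>bC$1\<bar>, \<bar>aD$1\<bar>, \<bar>bD$1\<bar>, \<bar>aE$1\<bar>, \<bar>bE$1\<bar>, \<bar>p$1\<bar>}"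
  have Mxb: "\<bar>aC$1\<bar> \<le> Mx" "\<bar>bC$1\<bar> \<le> Mx" "\<bar>aD$1\<bar> \<le> Mx" "\<bar>bD$1\<bar> \<le> Mx" "\<bar>aE$1\<bar> \<le> Mx"
    "\<bar>bE$1\<bar> \<le> Mx" "\<bar>p$1\<bar> \<le> Mx" unfolding Mx_def by (rule Max_ge; simp)+
  define M where "M = 1 + Mx"
  have Mb: "\<bar>aC$1\<bar> < M" "\<bar>bC$1\<bar> < M" "\<bar>aD$1\<bar> < M" "\<bar>bD$1\<bar> < M" "\<bar>aE$1\<bar> < M" "\<bar>bE$1\<bar> < M"
    "\<bar>p$1\<bar> < M" "0 < M" unfolding M_def using Mxb by linarith+
  define H where "H = Max {\<bar>lf aC uC (-M)\<bar>, \<bar>aC$2\<bar>, \<bar>bC$2\<bar>, \<bar>lf bC vC M\<bar>,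
     \<bar>lf aD uD (-M)\<bar>, \<bar>aD$2\<bar>, \<bar>bD$2\<bar>, \<bar>lf bD vD M\<bar>,
     \<bar>lf aE uE (-M)\<bar>, \<bar>aE$2\<bar>, \<bar>bE$2\<bar>, \<bar>lf bE vE M\<bar>, \<bar>p$2\<bar>}"
  have Hb: "\<bar>lf aC uC (-M)\<bar> \<le> H" "\<bar>aC$2\<bar> \<le> H" "\<bar>bC$2\<bar> \<le> H" "\<bar>lf bC vC M\<bar> \<le> H"
    "\<bar>lf aD uD (-M)\<bar> \<le> H" "\<bar>aD$2\<bar> \<le> H" "\<bar>bD$2\<bar> \<le> H" "\<bar>lf bD vD M\<bar> \<le> H"
    "\<bar>lf aE uE (-M)\<bar> \<le> H" "\<bar>aE$2\<bar> \<le> H" "\<bar>bE$2\<bar> \<le> H" "\<bar>lf bE vE M\<bar> \<le> H"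
    "\<bar>p$2\<bar> \<le> H" unfolding H_def by (rule Max_ge; simp)+
  let ?B = "cbox (pt (-M) (-H)) (pt M H)"
  have inB: "z \<in> ?B" if "\<bar>z$1\<bar> \<le> M" "\<bar>z$2\<bar> \<le> H" for z
    unfolding inbox using that by linarith
  have inB': "pt x y \<in> ?B" if "\<bar>x\<bar> \<le> M" "\<bar>y\<bar> \<le> H" for x y
    using inB[of "pt x y"] that by simp
  have bx: "pt (-M) (lf aC uC (-M)) \<in> ?B" "aC \<in> ?B" "bC \<in> ?B" "p \<in> ?B"
     "pt (-M) (lf aE uE (-M)) \<in> ?B" "aE \<in> ?B" "bE \<in> ?B"
     "pt (-M) (lf aD uD (-M)) \<in> ?B" "aD \<in> ?B" "bD \<in> ?B" "pt M (lf bD vD M) \<in> ?B"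
    by (auto intro!: inB inB' simp: Mb Hb less_imp_le)
  obtain gC where gC: "path gC" "path_image gC \<subseteq> chain aC bC uC vC \<inter> ?B"
      "pathstart gC = pt (-M) (lf aC uC (-M))" "pathfinish gC = p"
    using path_to_point[OF uC Mb(1,2) pC bx(1-4)] by blast
  obtain gE where gE: "path gE" "path_image gE \<subseteq> chain aE bE uE vE \<inter> ?B"
      "pathstart gE = pt (-M) (lf aE uE (-M))" "pathfinish gE = p"
    using path_to_point[OF uE Mb(5,6) pE bx(5-7,4)] by blast
  obtain gD where gD: "path gD" "path_image gD \<subseteq> chain aD bD uD vD \<inter> ?B"
      "pathstart gD = pt (-M) (lf aD uD (-M))" "pathfinish gD = pt M (lf bD vD M)"
    using path_across[OF uD Mb(3,4) bx(8-11)] by blast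
  let ?G = "gC +++ reversepath gE"
  have pG: "path ?G" using gC gE by (intro path_join_imp) auto
  have iG: "path_image ?G = path_image gC \<union> path_image gE" using gC gE
    by (simp add: path_image_join)
  have bG: "path_image ?G \<subseteq> ?B" using iG gC gE by blast
  have q1: "lf aC uC (-M) < lf aD uD (-M)"
    by (rule oCD[rule_format]) (use Mb(1,3) in \<open>simp add: abs_less_iff\<close>)
  have q2: "lf aD uD (-M) < lf aE uE (-M)"
    by (rule oDE[rule_format]) (use Mb(3,5) in \<open>simp add: abs_less_iff\<close>)
  have bD: "path_image gD \<subseteq> ?B" using gD(2) by blast
  have sG: "pathstart ?G = pt (-M) (lf aC uC (-M))" using gC(3) by simp
  have fG: "pathfinish ?G = pt (-M) (lf aE uE (-M))" using gE(3) by simp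
  obtain z where z: "z \<in> path_image gD" "z \<in> path_image ?G"
    using cross[OF Mb(8) gD(1) pG bD bG gD(3,4) sG fG q1 q2] by blast
  have "z \<in> chain aD bD uD vD" using z(1) gD(2) by blast
  moreover have "z \<in> chain aC bC uC vC \<or> z \<in> chain aE bE uE vE" using z(2) iG gC(2) gE(2) by blast
  ultimately show False using dCD dDE by blast
qed

lemma lr_trans_order:
  assumes uC: "uC$1 < 0" "0 < vC$1" and uD: "uD$1 < 0" "0 < vD$1" and uE: "uE$1 < 0" "0 < vE$1"
    and dCD: "chain aC bC uC vC \<inter> chain aD bD uD vD = {}"
    and dDE: "chain aD bD uD vD \<inter> chain aE bE uE vE = {}"
    and oCD: "\<forall>x \<le> min (aC$1) (aD$1). lf aC uC x < lf aD uD x"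
    and oDE: "\<forall>x \<le> min (aD$1) (aE$1). lf aD uD x < lf aE uE x"
  shows "chain aC bC uC vC \<inter> chain aE bE uE vE = {} \<and> (\<forall>x \<le> min (aC$1) (aE$1). lf aC uC x < lf aE uE x)"
proof -
  have dCE: "chain aC bC uC vC \<inter> chain aE bE uE vE = {}"
    using lr_trans[OF uC uD uE dCD dDE oCD oDE] .
  let ?m = "min (aC$1) (min (aD$1) (aE$1))"
  have "lf aC uC ?m < lf aD uD ?m" by (rule oCD[rule_format]) (simp add: min_le_iff_disj)
  moreover have "lf aD uD ?m < lf aE uE ?m" by (rule oDE[rule_format]) (simp add: min_le_iff_disj)
  ultimately have lt: "lf aC uC ?m < lf aE uE ?m" by linarith
  have mm: "?m \<le> min (aC$1) (aE$1)" by simp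
  from lr_sign[OF uC(1) uE(1) dCE]
  have "\<forall>x \<le> min (aC$1) (aE$1). lf aC uC x < lf aE uE x"
  proof
    assume "\<forall>x \<le> min (aC$1) (aE$1). lf aE uE x < lf aC uC x"
    hence "lf aE uE ?m < lf aC uC ?m" using mm by blast
    thus ?thesis using lt by linarith
  qed
  thus ?thesis using dCE by blast
qed


lemma chain_nonempty: "a \<in> chain a b u v"
  using half_line_base chain_parts(1) by blast

lemma lens_exists:
  assumes "a$1 \<noteq> b$1" "u$1 \<noteq> 0" "v$1 \<noteq> 0"
    and nLR1: "\<not> (u$1 < 0 \<and> 0 < v$1)" and nLR2: "\<not> (v$1 < 0 \<and> 0 < u$1)"
  shows "\<exists>l. lensok l \<and> lset l = chain a b u v"
proof -
  have s: "(u$1 < 0 \<and> v$1 < 0) \<or> (u$1 > 0 \<and> v$1 > 0)" using assms by linarith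
  show ?thesis
  proof (cases "u$1 < 0")
    case True
    hence v: "v$1 < 0" using s by linarith
    show ?thesis
    proof (cases "a$1 < b$1")
      case True thus ?thesis using LLlens[OF \<open>u$1 < 0\<close> v True] by blast
    next
      case False hence "b$1 < a$1" using assms(1) by linarith
      thus ?thesis using LLlens[OF v \<open>u$1 < 0\<close>] chain_swap[of a b u v] by metis
    qed
  next
    case False
    hence u: "u$1 > 0" "v$1 > 0" using s by linarith+
    show ?thesis
    proof (cases "b$1 < a$1")
      case True thus ?thesis using RRlens[OF u True] by blast
    next
      case False hence "a$1 < b$1" using assms(1) by linarith
      thus ?thesis using RRlens[OF u(2,1)] chain_swap[of a b u v] by metis
    qed
  qed
qed

lemma main_nonvert:
  fixes F :: "(real^2) set set"
  assumes fin: "finite F"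
    and rep: "\<forall>C\<in>F. \<exists>a b u v. a$1 \<noteq> b$1 \<and> u$1 \<noteq> 0 \<and> v$1 \<noteq> 0 \<and> C = chain a b u v"
  shows "\<exists>c::(real^2) set \<Rightarrow> nat. (\<forall>x\<in>F. c x < clique_number F disjointness_adj ^ 3 + clique_number F disjointness_adj) \<and>
      (\<forall>x\<in>F. \<forall>y\<in>F. x \<noteq> y \<and> disjointness_adj x y \<longrightarrow> c x \<noteq> c y)"
proof -
  define isLR where "isLR C \<longleftrightarrow> (\<exists>a b u v. u$1 < 0 \<and> 0 < v$1 \<and> C = chain a b u v)" for C :: "(real^2) set"
  define W1 where "W1 = {C \<in> F. isLR C}"
  have "\<forall>C\<in>W1. \<exists>q. case q of (a, b, u, v) \<Rightarrow> u$1 < 0 \<and> 0 < v$1 \<and> C = chain a b u v"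
  proof
    fix C assume "C \<in> W1"
    then obtain a b u v where "u$1 < 0 \<and> 0 < v$1 \<and> C = chain a b u v"
      unfolding W1_def isLR_def by blast
    thus "\<exists>q. case q of (a, b, u, v) \<Rightarrow> u$1 < 0 \<and> 0 < v$1 \<and> C = chain a b u v"
      by (intro exI[of _ "(a, b, u, v)"]) simp
  qed
  hence "\<exists>Q. \<forall>C\<in>W1. case Q C of (a, b, u, v) \<Rightarrow> u$1 < 0 \<and> 0 < v$1 \<and> C = chain a b u v"
    by (rule bchoice)
  then obtain Q where Q: "\<forall>C\<in>W1. case Q C of (a, b, u, v) \<Rightarrow> u$1 < 0 \<and> 0 < v$1 \<and> C = chain a b u v"
    by (elim exE)
  define A where "A C = fst (Q C)" for C
  define B where "B C = fst (snd (Q C))" for C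
  define U where "U C = fst (snd (snd (Q C)))" for C
  define V where "V C = snd (snd (snd (Q C)))" for C
  have R: "U C $1 < 0" "0 < V C $1" "C = chain (A C) (B C) (U C) (V C)" if "C \<in> W1" for C
  proof -
    obtain a b u v where q: "Q C = (a, b, u, v)" by (cases "Q C")
    have "u$1 < 0 \<and> 0 < v$1 \<and> C = chain a b u v" using Q that q by fastforce
    moreover have "A C = a" "B C = b" "U C = u" "V C = v" unfolding A_def B_def U_def V_def q by simp_all
    ultimately show "U C $1 < 0" "0 < V C $1" "C = chain (A C) (B C) (U C) (V C)" by simp_all
  qed
  have "\<forall>C\<in>F - W1. \<exists>l. lensok l \<and> lset l = C"
  proof
    fix C assume C: "C \<in> F - W1"
    have CF: "C \<in> F" and CW: "C \<notin> W1" using C by auto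
    have "\<exists>a b u v. a$1 \<noteq> b$1 \<and> u$1 \<noteq> 0 \<and> v$1 \<noteq> 0 \<and> C = chain a b u v" using rep CF by (rule bspec)
    then obtain a b u v where r: "a$1 \<noteq> b$1" "u$1 \<noteq> 0" "v$1 \<noteq> 0" "C = chain a b u v"
      by (elim exE conjE)
    have n1: "\<not> (u$1 < 0 \<and> 0 < v$1)"
    proof
      assume h: "u$1 < 0 \<and> 0 < v$1"
      have "isLR C" unfolding isLR_def using h r(4) by (intro exI) (elim conjE, intro conjI)
      thus False using CF CW unfolding W1_def by simp
    qed
    have n2: "\<not> (v$1 < 0 \<and> 0 < u$1)"
    proof
      assume h: "v$1 < 0 \<and> 0 < u$1"
      have "C = chain b a v u" using r(4) chain_swap by simp
      hence "isLR C" unfolding isLR_def using h by (intro exI) (elim conjE, intro conjI)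
      thus False using CF CW unfolding W1_def by simp
    qed
    show "\<exists>l. lensok l \<and> lset l = C" using lens_exists[OF r(1-3) n1 n2] r(4) by simp
  qed
  hence "\<exists>Lc. \<forall>C\<in>F - W1. lensok (Lc C) \<and> lset (Lc C) = C" by (rule bchoice)
  then obtain Lc where Lc: "\<forall>C\<in>F - W1. lensok (Lc C) \<and> lset (Lc C) = C" by (elim exE)
  let ?E = "disjointness_adj :: (real^2) set \<Rightarrow> (real^2) set \<Rightarrow> bool"
  define P0 where "P0 C D \<longleftrightarrow> C \<inter> D = {} \<and> (\<forall>x \<le> min (A C$1) (A D$1). lf (A C) (U C) x < lf (A D) (U D) x)"
    for C D
  define P1 where "P1 C D \<longleftrightarrow> below (Lc C) (Lc D) \<and> typeok (Lc C) (Lc D)" for C D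
  define P2 where "P2 C D \<longleftrightarrow> below (Lc D) (Lc C) \<and> typeok (Lc C) (Lc D)" for C D
  define P3 where "P3 C D \<longleftrightarrow> nested (Lc C) (Lc D)" for C D
  have W1F: "W1 \<subseteq> F" unfolding W1_def by auto
  have sym: "\<And>x y. ?E x y \<Longrightarrow> ?E y x" unfolding disjointness_adj_def by blast
  have LcC: "lset (Lc C) = C" "lensok (Lc C)" if "C \<in> F - W1" for C using Lc that by auto
  show ?thesis
  proof (rule coloring_bound[OF fin sym W1F, where ?P0.0=P0 and ?P1.0=P1 and ?P2.0=P2 and ?P3.0=P3])
    fix x assume x: "x \<in> W1"
    show "\<not> P0 x x" unfolding P0_def using chain_nonempty R(3)[OF x] by (metis disjoint_iff)
  next
    fix x y z assume xyz: "x \<in> W1" "y \<in> W1" "z \<in> W1" and p: "P0 x y" "P0 y z"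
    show "P0 x z"
      using lr_trans_order[OF R(1,2)[OF xyz(1)] R(1,2)[OF xyz(2)] R(1,2)[OF xyz(3)]] p
        R(3)[OF xyz(1)] R(3)[OF xyz(2)] R(3)[OF xyz(3)] unfolding P0_def by metis
  next
    fix x y assume "x \<in> W1" "y \<in> W1" "P0 x y"
    thus "?E x y" unfolding P0_def disjointness_adj_def by simp
  next
    fix x y assume xy: "x \<in> W1" "y \<in> W1" "x \<noteq> y" "?E x y"
    have dj: "chain (A x) (B x) (U x) (V x) \<inter> chain (A y) (B y) (U y) (V y) = {}"
      using xy(4) R(3)[OF xy(1)] R(3)[OF xy(2)] unfolding disjointness_adj_def by metis
    from lr_sign[OF R(1)[OF xy(1)] R(1)[OF xy(2)] dj]
    show "P0 x y \<or> P0 y x" unfolding P0_def using xy(4) unfolding disjointness_adj_def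
      by (metis inf_commute min.commute)
  next
    fix x assume "x \<in> F - W1" thus "\<not> P1 x x" unfolding P1_def using below_irrefl by blast
  next
    fix x y z assume "x \<in> F - W1" "y \<in> F - W1" "z \<in> F - W1" "P1 x y" "P1 y z"
    thus "P1 x z" unfolding P1_def using below_trans typeok_trans by blast
  next
    fix x y assume "x \<in> F - W1" "y \<in> F - W1" "P1 x y"
    thus "?E x y" unfolding P1_def disjointness_adj_def using below_disj LcC by metis
  next
    fix x assume "x \<in> F - W1" thus "\<not> P2 x x" unfolding P2_def using below_irrefl by blast
  next
    fix x y z assume "x \<in> F - W1" "y \<in> F - W1" "z \<in> F - W1" "P2 x y" "P2 y z"
    thus "P2 x z" unfolding P2_def using below_trans2 typeok_trans by blast
  next
    fix x y assume "x \<in> F - W1" "y \<in> F - W1" "P2 x y"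
    thus "?E x y" unfolding P2_def disjointness_adj_def using below_disj LcC by (metis inf_commute)
  next
    fix x assume "x \<in> F - W1" thus "\<not> P3 x x" unfolding P3_def using nested_irrefl by blast
  next
    fix x y z assume "x \<in> F - W1" "y \<in> F - W1" "z \<in> F - W1" "P3 x y" "P3 y z"
    thus "P3 x z" unfolding P3_def using nested_trans by blast
  next
    fix x y assume "x \<in> F - W1" "y \<in> F - W1" "P3 x y"
    thus "?E x y" unfolding P3_def disjointness_adj_def using nested_disj LcC by metis
  next
    fix x y assume xy: "x \<in> F - W1" "y \<in> F - W1" "x \<noteq> y" "?E x y"
    have dj: "lset (Lc x) \<inter> lset (Lc y) = {}" using xy LcC unfolding disjointness_adj_def by metis
    from classify[OF LcC(2)[OF xy(1)] LcC(2)[OF xy(2)] dj]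
    show "P1 x y \<or> P1 y x \<or> P2 x y \<or> P2 y x \<or> P3 x y \<or> P3 y x"
      unfolding P1_def P2_def P3_def using below_cover by blast
  qed
qed


definition rotL :: "real \<Rightarrow> real^2 \<Rightarrow> real^2" where
  "rotL \<alpha> p = vector [\<alpha> * p$1 + p$2, \<alpha> * p$2 - p$1]"

lemma rotL_add: "rotL \<alpha> (x + y) = rotL \<alpha> x + rotL \<alpha> y"
  unfolding rotL_def vec2_eq' by (simp add: algebra_simps)

lemma rotL_scale: "rotL \<alpha> (c *\<^sub>R x) = c *\<^sub>R rotL \<alpha> x"
  unfolding rotL_def vec2_eq' by (simp add: algebra_simps)

lemma rotL_diff: "rotL \<alpha> (x - y) = rotL \<alpha> x - rotL \<alpha> y"
  unfolding rotL_def vec2_eq' by (simp add: algebra_simps)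

lemma rotL_linear: "linear (rotL \<alpha>)"
  by (rule linearI) (simp_all add: rotL_add rotL_scale)

lemma rotL_inj: "inj (rotL \<alpha>)"
proof (rule injI)
  fix x y assume "rotL \<alpha> x = rotL \<alpha> y"
  hence e1: "\<alpha> * x$1 + x$2 = \<alpha> * y$1 + y$2" and e2: "\<alpha> * x$2 - x$1 = \<alpha> * y$2 - y$1"
    unfolding rotL_def vec2_eq' by simp_all
  define d1 where "d1 = x$1 - y$1"
  define d2 where "d2 = x$2 - y$2"
  have h1: "d2 = - \<alpha> * d1" using e1 unfolding d1_def d2_def by (simp add: algebra_simps)
  have h2: "d1 = \<alpha> * d2" using e2 unfolding d1_def d2_def by (simp add: algebra_simps)
  have e: "d1 = \<alpha> * (- \<alpha> * d1)" using h2[unfolded h1] .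
  have e2: "\<alpha> * (- \<alpha> * d1) = - (\<alpha> * (\<alpha> * d1))" by simp
  have e3: "d1 * (1 + \<alpha> * \<alpha>) = d1 + \<alpha> * (\<alpha> * d1)" by (simp add: algebra_simps)
  have "d1 * (1 + \<alpha> * \<alpha>) = 0" using e e2 e3 by linarith
  moreover have "0 \<le> \<alpha> * \<alpha>" by simp
  hence "1 + \<alpha> * \<alpha> \<noteq> 0" by linarith
  ultimately have "d1 = 0" by simp
  hence "d2 = 0" using h1 by simp
  thus "x = y" using \<open>d1 = 0\<close> unfolding d1_def d2_def vec2_eq' by simp
qed

lemma half_line_image: "half_line a u = (\<lambda>t. a + t *\<^sub>R u) ` {0..}"
  unfolding half_line_def by auto

lemma rotL_half_line: "rotL \<alpha> ` half_line a u = half_line (rotL \<alpha> a) (rotL \<alpha> u)"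
  unfolding half_line_image image_image rotL_add rotL_scale ..

lemma inj_imageI: "inj f \<Longrightarrow> inj (image f)"
  unfolding inj_def using inj_image_eq_iff by blast

lemma rotL_chain: "rotL \<alpha> ` chain a b u v = chain (rotL \<alpha> a) (rotL \<alpha> b) (rotL \<alpha> u) (rotL \<alpha> v)"
  unfolding chain_def image_Un rotL_half_line closed_segment_linear_image[OF rotL_linear] ..

lemma rotL_1: "(rotL \<alpha> w)$1 = \<alpha> * w$1 + w$2" unfolding rotL_def by simp

lemma good_alpha:
  assumes "finite D" "\<forall>w\<in>D. w \<noteq> (0::real^2)"
  shows "\<exists>\<alpha>. \<forall>w\<in>D. (rotL \<alpha> w)$1 \<noteq> 0"
proof -
  have "finite ((\<lambda>w. - w$2 / w$1) ` D)" using assms(1) by simp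
  then obtain \<alpha> :: real where al: "\<alpha> \<notin> (\<lambda>w. - w$2 / w$1) ` D"
    using ex_new_if_finite[OF infinite_UNIV_char_0] by blast
  have "(rotL \<alpha> w)$1 \<noteq> 0" if w: "w \<in> D" for w
  proof (cases "w$1 = 0")
    case True
    hence "w$2 \<noteq> 0" using assms(2) w unfolding vec2_eq' by auto
    thus ?thesis unfolding rotL_1 using True by simp
  next
    case False
    have "\<alpha> \<noteq> - w$2 / w$1" using al w by blast
    hence "\<alpha> * w$1 \<noteq> - w$2" using False by (simp add: field_simps)
    thus ?thesis unfolding rotL_1 by linarith
  qed
  thus ?thesis by blast
qed

lemma clique_image_le:
  assumes fin: "finite F" and inj: "inj f"
  shows "clique_number ((image f) ` F) disjointness_adj \<le> clique_number F disjointness_adj"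
proof -
  let ?S' = "{card K | K. K \<subseteq> (image f) ` F \<and> (\<forall>x\<in>K. \<forall>y\<in>K. x \<noteq> y \<longrightarrow> disjointness_adj x y)}"
  have finS': "finite ?S'"
  proof -
    have "?S' \<subseteq> card ` Pow ((image f) ` F)" by auto
    thus ?thesis using fin by (meson finite_Pow_iff finite_imageI finite_subset)
  qed
  have neS': "?S' \<noteq> {}" by auto
  have injI: "inj (image f)" using inj by (rule inj_imageI)
  have kle: "k \<le> clique_number F disjointness_adj" if "k \<in> ?S'" for k
  proof -
    have "\<exists>K'. k = card K' \<and> K' \<subseteq> (image f) ` F \<and>
      (\<forall>x\<in>K'. \<forall>y\<in>K'. x \<noteq> y \<longrightarrow> disjointness_adj x y)" using \<open>k \<in> ?S'\<close> by simp
    then obtain K' where K': "k = card K'" "K' \<subseteq> (image f) ` F"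
      "\<forall>x\<in>K'. \<forall>y\<in>K'. x \<noteq> y \<longrightarrow> disjointness_adj x y" by (elim exE conjE)
    define K where "K = {C \<in> F. f ` C \<in> K'}"
    have KK: "(image f) ` K = K'" unfolding K_def using K'(2) by blast
    have "card K = card K'" unfolding KK[symmetric] using injI
      by (simp add: card_image inj_on_subset)
    moreover have "card K \<le> clique_number F disjointness_adj"
    proof (rule clique_card_le[OF fin])
      show "K \<subseteq> F" unfolding K_def by auto
      show "\<forall>x\<in>K. \<forall>y\<in>K. x \<noteq> y \<longrightarrow> disjointness_adj x y"
      proof (intro ballI impI)
        fix x y assume xy: "x \<in> K" "y \<in> K" "x \<noteq> y"
        have "f ` x \<noteq> f ` y" using xy(3) injI by (meson injD)
        hence "disjointness_adj (f ` x) (f ` y)" using K'(3) xy unfolding K_def by auto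
        thus "disjointness_adj x y" unfolding disjointness_adj_def by blast
      qed
    qed
    ultimately show ?thesis using K'(1) by simp
  qed
  have "\<forall>k\<in>?S'. k \<le> clique_number F disjointness_adj" by (intro ballI kle)
  thus ?thesis unfolding clique_number_def[of "(image f) ` F"] using Max_le_iff[OF finS' neS'] by simp
qed

theorem theorem5:
  fixes F :: "(real^2) set set"
  assumes "finite F"
    and "\<forall>C\<in>F. two_way_3chain C"
  shows "chromatic_number F disjointness_adj
           \<le> clique_number F disjointness_adj ^ 3 + clique_number F disjointness_adj"
proof -
  have "\<forall>C\<in>F. \<exists>q. case q of (a, b, u, v) \<Rightarrow> a \<noteq> b \<and> u \<noteq> 0 \<and> v \<noteq> 0 \<and> C = chain a b u v"
  proof
    fix C assume "C \<in> F"
    hence "two_way_3chain C" using assms(2) by blast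
    hence "\<exists>a b u v. a \<noteq> b \<and> u \<noteq> 0 \<and> v \<noteq> 0 \<and> C = chain a b u v"
      unfolding two_way_3chain_def chain_def .
    then obtain a b u v where "a \<noteq> b \<and> u \<noteq> 0 \<and> v \<noteq> 0 \<and> C = chain a b u v"
      by (elim exE)
    thus "\<exists>q. case q of (a, b, u, v) \<Rightarrow> a \<noteq> b \<and> u \<noteq> 0 \<and> v \<noteq> 0 \<and> C = chain a b u v"
      by (intro exI[of _ "(a, b, u, v)"]) simp
  qed
  hence "\<exists>Q. \<forall>C\<in>F. case Q C of (a, b, u, v) \<Rightarrow> a \<noteq> b \<and> u \<noteq> 0 \<and> v \<noteq> 0 \<and> C = chain a b u v"
    by (rule bchoice)
  then obtain Q where Q: "\<forall>C\<in>F. case Q C of (a, b, u, v) \<Rightarrow> a \<noteq> b \<and> u \<noteq> 0 \<and> v \<noteq> 0 \<and> C = chain a b u v"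
    by (elim exE)
  define A where "A C = fst (Q C)" for C
  define B where "B C = fst (snd (Q C))" for C
  define U where "U C = fst (snd (snd (Q C)))" for C
  define V where "V C = snd (snd (snd (Q C)))" for C
  have R: "A C \<noteq> B C" "U C \<noteq> 0" "V C \<noteq> 0" "C = chain (A C) (B C) (U C) (V C)" if "C \<in> F" for C
  proof -
    obtain a b u v where q: "Q C = (a, b, u, v)" by (cases "Q C")
    have "a \<noteq> b \<and> u \<noteq> 0 \<and> v \<noteq> 0 \<and> C = chain a b u v" using Q that q by fastforce
    moreover have "A C = a" "B C = b" "U C = u" "V C = v" unfolding A_def B_def U_def V_def q by simp_all
    ultimately show "A C \<noteq> B C" "U C \<noteq> 0" "V C \<noteq> 0" "C = chain (A C) (B C) (U C) (V C)" by simp_all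
  qed
  define D where "D = U ` F \<union> V ` F \<union> (\<lambda>C. B C - A C) ` F"
  have finD: "finite D" unfolding D_def using assms(1) by simp
  have R': "B C \<noteq> A C" if "C \<in> F" for C using R(1)[OF that] by metis
  have nzD: "\<forall>w\<in>D. w \<noteq> 0" unfolding D_def using R R' by auto
  obtain \<alpha> where al: "\<forall>w\<in>D. (rotL \<alpha> w)$1 \<noteq> 0" using good_alpha[OF finD nzD] by blast
  let ?L = "rotL \<alpha>"
  let ?F' = "(image ?L) ` F"
  have rep': "\<forall>C'\<in>?F'. \<exists>a b u v. a$1 \<noteq> b$1 \<and> u$1 \<noteq> 0 \<and> v$1 \<noteq> 0 \<and> C' = chain a b u v"
  proof
    fix C' assume "C' \<in> ?F'"
    then obtain C where C: "C \<in> F" "C' = ?L ` C" by blast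
    have "(?L (B C - A C))$1 \<noteq> 0" using al C(1) unfolding D_def by blast
    hence "(?L (A C))$1 \<noteq> (?L (B C))$1" unfolding rotL_diff by simp
    moreover have "(?L (U C))$1 \<noteq> 0" "(?L (V C))$1 \<noteq> 0" using al C(1) unfolding D_def by blast+
    moreover have "C' = chain (?L (A C)) (?L (B C)) (?L (U C)) (?L (V C))"
      using C R(4)[OF C(1)] rotL_chain by metis
    ultimately show "\<exists>a b u v. a$1 \<noteq> b$1 \<and> u$1 \<noteq> 0 \<and> v$1 \<noteq> 0 \<and> C' = chain a b u v" by blast
  qed
  have finF': "finite ?F'" using assms(1) by simp
  from main_nonvert[OF finF' rep'] obtain c' where c': "\<forall>x\<in>?F'. c' x < clique_number ?F' disjointness_adj ^ 3 + clique_number ?F' disjointness_adj"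
    "\<forall>x\<in>?F'. \<forall>y\<in>?F'. x \<noteq> y \<and> disjointness_adj x y \<longrightarrow> c' x \<noteq> c' y"
    by (elim exE conjE)
  have wle: "clique_number ?F' disjointness_adj \<le> clique_number F disjointness_adj"
    using clique_image_le[OF assms(1) rotL_inj] .
  hence pw: "clique_number ?F' disjointness_adj ^ 3 + clique_number ?F' disjointness_adj
      \<le> clique_number F disjointness_adj ^ 3 + clique_number F disjointness_adj"
    by (intro add_mono power_mono) simp_all
  have injI: "inj (image ?L)" using rotL_inj by (rule inj_imageI)
  show ?thesis
  proof (rule chromatic_le)
    show "\<forall>x\<in>F. c' (?L ` x) < clique_number F disjointness_adj ^ 3 + clique_number F disjointness_adj"
    proof
      fix x assume "x \<in> F"
      hence "?L ` x \<in> ?F'" by blast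
      thus "c' (?L ` x) < clique_number F disjointness_adj ^ 3 + clique_number F disjointness_adj"
        using c'(1) pw by (meson order_less_le_trans)
    qed
    show "\<forall>x\<in>F. \<forall>y\<in>F. x \<noteq> y \<and> disjointness_adj x y \<longrightarrow> c' (?L ` x) \<noteq> c' (?L ` y)"
    proof (intro ballI impI)
      fix x y assume xy: "x \<in> F" "y \<in> F" "x \<noteq> y \<and> disjointness_adj x y"
      have "?L ` x \<noteq> ?L ` y" using xy(3) injI by (meson injD)
      moreover have "disjointness_adj (?L ` x) (?L ` y)"
        using xy(3) rotL_inj unfolding disjointness_adj_def by (simp add: image_Int[symmetric])
      moreover have mx: "?L ` x \<in> ?F'" using xy(1) by (rule imageI)
      moreover have my: "?L ` y \<in> ?F'" using xy(2) by (rule imageI)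
      ultimately show "c' (?L ` x) \<noteq> c' (?L ` y)" using c'(2)[rule_format, OF mx my] by blast
    qed
  qed
qed

end
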